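(* For every positive integer $m$ there is a sentence $\varphi_m\in\mathrm{FO}^2_m[<]$ over the alphabet $\Sigma_m$ that separates $K_m$ and $L_m$.
   Context: Let $\Sigma_m=\{a_0,\dots,a_{m-1}\}$. For positive integers $i,n$ define words: $u_{1,n}=a_0$, $v_{1,n}=\varepsilon$ (empty word); $u_{2,n}=a_0(a_1a_0)^{2n}$, $v_{2,n}=(a_1a_0)^{2n}$; $u_{2i+1,n}=(a_0a_1\cdots a_{2i})^n\,u_{2i,n}$, $v_{2i+1,n}=(a_0a_1\cdots a_{2i})^n\,v_{2i,n}$; $u_{2i+2,n}=u_{2i+1,n}\,(a_{2i+1}a_{2i}\cdots a_0)^n$, $v_{2i+2,n}=v_{2i+1,n}\,(a_{2i+1}a_{2i}\cdots a_0)^n$. Let $K_m=\{u_{m,n}:n\ge1\}$ and $L_m=\{v_{m,n}:n\ge1\}$. Words are finite structures with universe $\{1,\dots,|w|\}$, unary predicates $Q_a$ marking positions carrying $a$, and the order $<$. $\mathrm{FO}^2_n[<]$ is first-order logic over this signature using only the variables $x,y$ with quantifier depth at most $n$; $\mathrm{FO}^2_{m,n}[<]$ is the set of its formulas in which every path in the parse tree has at most $m$ blocks of alternating quantifiers; $\mathrm{FO}^2_m[<]=\bigcup_{n\ge m}\mathrm{FO}^2_{m,n}[<]$. A formula $\varphi$ separates $K,L$ if every word of $K$ satisfies $\varphi$ and no word of $L$ does, or vice versa. *)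

theory Defs
  imports Main
begin

text \<open>Letters a_i of the alphabet are represented by natural numbers i;
  Sigma_m = {0,...,m-1}. Words are lists of letters.\<close>

datatype var = VX | VY

datatype fo2 =
    FTrue
  | FFalse
  | Letter nat var
  | Less var var
  | Eq var var
  | Neg fo2
  | And fo2 fo2
  | Or fo2 fo2
  | Ex var fo2
  | All var fo2

text \<open>Semantics: universe {1..|w|}; position i carries letter w!(i-1).\<close>
fun sat :: "nat list \<Rightarrow> (var \<Rightarrow> nat) \<Rightarrow> fo2 \<Rightarrow> bool" where
  "sat w s FTrue = True"
| "sat w s FFalse = False"
| "sat w s (Letter a v) = (w ! (s v - 1) = a)"
| "sat w s (Less u v) = (s u < s v)"
| "sat w s (Eq u v) = (s u = s v)"
| "sat w s (Neg \<phi>) = (\<not> sat w s \<phi>)"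
| "sat w s (And \<phi> \<psi>) = (sat w s \<phi> \<and> sat w s \<psi>)"
| "sat w s (Or \<phi> \<psi>) = (sat w s \<phi> \<or> sat w s \<psi>)"
| "sat w s (Ex v \<phi>) = (\<exists>i\<in>{1..length w}. sat w (s(v := i)) \<phi>)"
| "sat w s (All v \<phi>) = (\<forall>i\<in>{1..length w}. sat w (s(v := i)) \<phi>)"

fun freev :: "fo2 \<Rightarrow> var set" where
  "freev FTrue = {}"
| "freev FFalse = {}"
| "freev (Letter a v) = {v}"
| "freev (Less u v) = {u, v}"
| "freev (Eq u v) = {u, v}"
| "freev (Neg \<phi>) = freev \<phi>"
| "freev (And \<phi> \<psi>) = freev \<phi> \<union> freev \<psi>"
| "freev (Or \<phi> \<psi>) = freev \<phi> \<union> freev \<psi>"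
| "freev (Ex v \<phi>) = freev \<phi> - {v}"
| "freev (All v \<phi>) = freev \<phi> - {v}"

definition sentence :: "fo2 \<Rightarrow> bool" where
  "sentence \<phi> \<longleftrightarrow> freev \<phi> = {}"

text \<open>A sentence is true in a word (its truth is independent of the assignment).\<close>
definition models :: "nat list \<Rightarrow> fo2 \<Rightarrow> bool" where
  "models w \<phi> \<longleftrightarrow> sat w (\<lambda>_. 0) \<phi>"

fun letters :: "fo2 \<Rightarrow> nat set" where
  "letters (Letter a v) = {a}"
| "letters (Neg \<phi>) = letters \<phi>"
| "letters (And \<phi> \<psi>) = letters \<phi> \<union> letters \<psi>"
| "letters (Or \<phi> \<psi>) = letters \<phi> \<union> letters \<psi>"
| "letters (Ex v \<phi>) = letters \<phi>"
| "letters (All v \<phi>) = letters \<phi>"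
| "letters _ = {}"

definition over_alphabet :: "nat \<Rightarrow> fo2 \<Rightarrow> bool" where
  "over_alphabet m \<phi> \<longleftrightarrow> letters \<phi> \<subseteq> {..<m}"

fun qdepth :: "fo2 \<Rightarrow> nat" where
  "qdepth (Neg \<phi>) = qdepth \<phi>"
| "qdepth (And \<phi> \<psi>) = max (qdepth \<phi>) (qdepth \<psi>)"
| "qdepth (Or \<phi> \<psi>) = max (qdepth \<phi>) (qdepth \<psi>)"
| "qdepth (Ex v \<phi>) = Suc (qdepth \<phi>)"
| "qdepth (All v \<phi>) = Suc (qdepth \<phi>)"
| "qdepth _ = 0"

text \<open>Maximal number of blocks of alternating quantifiers along a path of the
  parse tree. Negations are taken into account by polarity (equivalently:
  counted on the negation normal form). Arguments: current polarity
  (True = positive), the effective type of the last quantifier seen on the path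
  (None, Some True = existential, Some False = universal).\<close>
fun nblocks :: "bool \<Rightarrow> bool option \<Rightarrow> fo2 \<Rightarrow> nat" where
  "nblocks p l (Neg \<phi>) = nblocks (\<not> p) l \<phi>"
| "nblocks p l (And \<phi> \<psi>) = max (nblocks p l \<phi>) (nblocks p l \<psi>)"
| "nblocks p l (Or \<phi> \<psi>) = max (nblocks p l \<phi>) (nblocks p l \<psi>)"
| "nblocks p l (Ex v \<phi>) =
     (if l = Some p then 0 else 1) + nblocks p (Some p) \<phi>"
| "nblocks p l (All v \<phi>) =
     (if l = Some (\<not> p) then 0 else 1) + nblocks p (Some (\<not> p)) \<phi>"
| "nblocks p l _ = 0"

definition blocks :: "fo2 \<Rightarrow> nat" where
  "blocks \<phi> = nblocks True None \<phi>"

definition FO2_mn :: "nat \<Rightarrow> nat \<Rightarrow> fo2 set" where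
  "FO2_mn m n = {\<phi>. qdepth \<phi> \<le> n \<and> blocks \<phi> \<le> m}"

definition FO2_m :: "nat \<Rightarrow> fo2 set" where
  "FO2_m m = (\<Union>n\<in>{m..}. FO2_mn m n)"

definition separates :: "fo2 \<Rightarrow> nat list set \<Rightarrow> nat list set \<Rightarrow> bool" where
  "separates \<phi> K L \<longleftrightarrow>
     ((\<forall>w\<in>K. models w \<phi>) \<and> (\<forall>w\<in>L. \<not> models w \<phi>)) \<or>
     ((\<forall>w\<in>L. models w \<phi>) \<and> (\<forall>w\<in>K. \<not> models w \<phi>))"

fun uw :: "nat \<Rightarrow> nat \<Rightarrow> nat list" where
  "uw 0 n = []"
| "uw (Suc 0) n = [0]"
| "uw (Suc (Suc 0)) n = 0 # concat (replicate (2 * n) [1, 0])"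
| "uw (Suc (Suc (Suc k))) n =
     (if odd (Suc (Suc (Suc k)))
      then concat (replicate n [0..<Suc (Suc (Suc k))]) @ uw (Suc (Suc k)) n
      else uw (Suc (Suc k)) n @ concat (replicate n (rev [0..<Suc (Suc (Suc k))])))"

fun vw :: "nat \<Rightarrow> nat \<Rightarrow> nat list" where
  "vw 0 n = []"
| "vw (Suc 0) n = []"
| "vw (Suc (Suc 0)) n = concat (replicate (2 * n) [1, 0])"
| "vw (Suc (Suc (Suc k))) n =
     (if odd (Suc (Suc (Suc k)))
      then concat (replicate n [0..<Suc (Suc (Suc k))]) @ vw (Suc (Suc k)) n
      else vw (Suc (Suc k)) n @ concat (replicate n (rev [0..<Suc (Suc (Suc k))])))"

definition KK :: "nat \<Rightarrow> nat list set" where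
  "KK m = {uw m n | n. n \<ge> 1}"

definition LL :: "nat \<Rightarrow> nat list set" where
  "LL m = {vw m n | n. n \<ge> 1}"

end

theory Submission
  imports Defs
begin

fun ov :: "var \<Rightarrow> var" where "ov VX = VY" | "ov VY = VX"

lemma ov_ne[simp]: "ov v \<noteq> v" "v \<noteq> ov v" by (cases v; auto)+

fun Rk :: "nat \<Rightarrow> nat \<Rightarrow> var \<Rightarrow> fo2" where
  "Rk 0 k v = FTrue"
| "Rk (Suc d) k v = And (Rk d (Suc k) v)
     (All (ov v) (Or (Or (if even k then Less (ov v) v else Less v (ov v)) (Neg (Letter k (ov v))))
                     (Neg (Rk d (Suc k) (ov v)))))"

lemma nb_Rk: "nblocks p l (Rk d k v) \<le> d \<and> (l = Some (\<not> p) \<longrightarrow> nblocks p l (Rk d k v) \<le> d - 1)"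
proof (induction d arbitrary: p l k v)
  case 0 then show ?case by simp
next
  case (Suc d)
  have a: "nblocks (\<not>p) (Some (\<not> p)) (Rk d (Suc k) (ov v)) \<le> d"
    using Suc.IH by blast
  have b: "nblocks p l (Rk d (Suc k) v) \<le> d" using Suc.IH by blast
  have c: "nblocks p (Some (\<not> p)) (if even k then Less (ov v) v else Less v (ov v)) = 0" by simp
  have eq: "nblocks p l (Rk (Suc d) k v) = max (nblocks p l (Rk d (Suc k) v))
     ((if l = Some (\<not> p) then 0 else 1) + nblocks (\<not>p) (Some (\<not> p)) (Rk d (Suc k) (ov v)))"
    by (simp only: Rk.simps nblocks.simps c)
  have b2: "l = Some (\<not> p) \<Longrightarrow> nblocks p l (Rk d (Suc k) v) \<le> d" using b by simp
  show ?case unfolding eq using a b by (cases "l = Some (\<not> p)") simp_all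
qed

lemma fv_Rk: "freev (Rk d k v) \<subseteq> {v}"
proof (induction d arbitrary: k v)
  case 0 then show ?case by simp
next
  case (Suc d)
  have "freev (Rk d (Suc k) (ov v)) \<subseteq> {ov v}" "freev (Rk d (Suc k) v) \<subseteq> {v}" using Suc.IH by blast+
  then show ?case by auto
qed

lemma let_Rk: "letters (Rk d k v) \<subseteq> {k..<k+d}"
proof (induction d arbitrary: k v)
  case 0 then show ?case by simp
next
  case (Suc d)
  have c: "letters (if even k then Less (ov v) v else Less v (ov v)) = {}" by simp
  have eq: "letters (Rk (Suc d) k v) = letters (Rk d (Suc k) v) \<union> {k} \<union> letters (Rk d (Suc k) (ov v))"
    by (simp only: Rk.simps letters.simps c) blast
  have "letters (Rk d (Suc k) v) \<subseteq> {Suc k..<Suc k + d}" "letters (Rk d (Suc k) (ov v)) \<subseteq> {Suc k..<Suc k + d}"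
    using Suc.IH by blast+
  then show ?case unfolding eq by auto
qed

abbreviation cr :: "nat \<Rightarrow> nat list \<Rightarrow> nat list" where "cr n xs \<equiv> concat (replicate n xs)"

lemma pre_prop: assumes "xs \<noteq> []" "last xs = c"
  shows "i < length (cr n xs) \<Longrightarrow> \<exists>l. i \<le> l \<and> l < length (cr n xs) \<and> cr n xs ! l = c"
proof (induction n arbitrary: i)
  case 0 then show ?case by simp
next
  case (Suc n)
  show ?case
  proof (cases "i < length xs")
    case True
    then show ?thesis using assms by (intro exI[of _ "length xs - 1"]) (auto simp: nth_append last_conv_nth)
  next
    case False
    have "i - length xs < length (cr n xs)" using False Suc.prems by simp
    then obtain l where "i - length xs \<le> l" "l < length (cr n xs)" "cr n xs ! l = c"
      using Suc.IH[of "i - length xs"] by blast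
    then show ?thesis using False by (intro exI[of _ "l + length xs"]) (auto simp: nth_append)
  qed
qed

lemma suf_prop: assumes "xs \<noteq> []" "hd xs = c"
  shows "i < length (cr n xs) \<Longrightarrow> \<exists>l\<le>i. cr n xs ! l = c"
proof (induction n arbitrary: i)
  case 0 then show ?case by simp
next
  case (Suc n)
  show ?case
  proof (cases "i < length xs")
    case True
    then show ?thesis using assms by (intro exI[of _ 0]) (auto simp: nth_append hd_conv_nth)
  next
    case False
    have "i - length xs < length (cr n xs)" using False Suc.prems by simp
    then obtain l where "l \<le> i - length xs" "cr n xs ! l = c"
      using Suc.IH[of "i - length xs"] by blast
    then show ?thesis using False by (intro exI[of _ "l + length xs"]) (auto simp: nth_append)
  qed
qed

lemma nth4_2: "l < length P \<Longrightarrow> (A @ P @ M @ B) ! (length A + l) = P ! l"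
  by (simp add: nth_append)
lemma nth4_3: "l < length M \<Longrightarrow> (A @ P @ M @ B) ! (length A + length P + l) = M ! l"
  by (simp add: nth_append)

lemma step_even:
  assumes P: "\<And>i. i < length P \<Longrightarrow> \<exists>l. i \<le> l \<and> l < length P \<and> P ! l = c"
    and M: "c \<notin> set M" and x: "x \<in> {1..length (A @ P @ M @ B)}"
  shows "((length A < x \<and> x \<le> length A + length (P @ M)) \<and>
     (\<forall>i\<in>{1..length (A @ P @ M @ B)}. (i < x \<or> \<not> (A @ P @ M @ B) ! (i - 1) = c)
          \<or> \<not> (length A < i \<and> i \<le> length A + length (P @ M))))
   \<longleftrightarrow> (length (A @ P) < x \<and> x \<le> length (A @ P) + length M)"
proof
  assume h: "(length A < x \<and> x \<le> length A + length (P @ M)) \<and>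
     (\<forall>i\<in>{1..length (A @ P @ M @ B)}. (i < x \<or> \<not> (A @ P @ M @ B) ! (i - 1) = c)
          \<or> \<not> (length A < i \<and> i \<le> length A + length (P @ M)))"
  show "length (A @ P) < x \<and> x \<le> length (A @ P) + length M"
  proof (rule ccontr)
    assume nt: "\<not> ?thesis"
    have h1: "length A < x" "x \<le> length A + length P + length M" using h by auto
    have gx: "x \<le> length A + length P" using nt h1 by auto
    have xs: "x - 1 - length A < length P" using gx h1 by arith
    then obtain l where l: "x - 1 - length A \<le> l" "l < length P" "P ! l = c" using P by blast
    have e1: "(A @ P @ M @ B) ! (length A + l + 1 - 1) = c" using l nth4_2[of l P A M B] by simp
    have i1: "length A + l + 1 \<in> {1..length (A @ P @ M @ B)}" using l(2) by simp
    have i2: "\<not> length A + l + 1 < x" using l(1) h1 by arith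
    have i3: "length A < length A + l + 1 \<and> length A + l + 1 \<le> length A + length (P @ M)"
      using l(2) by simp
    from h[THEN conjunct2, rule_format, OF i1] i2 i3 e1
    show False by blast
  qed
next
  assume h: "length (A @ P) < x \<and> x \<le> length (A @ P) + length M"
  show "(length A < x \<and> x \<le> length A + length (P @ M)) \<and>
     (\<forall>i\<in>{1..length (A @ P @ M @ B)}. (i < x \<or> \<not> (A @ P @ M @ B) ! (i - 1) = c)
          \<or> \<not> (length A < i \<and> i \<le> length A + length (P @ M)))"
  proof (intro conjI ballI)
    fix i assume i: "i \<in> {1..length (A @ P @ M @ B)}"
    show "(i < x \<or> \<not> (A @ P @ M @ B) ! (i - 1) = c)
          \<or> \<not> (length A < i \<and> i \<le> length A + length (P @ M))"
    proof (cases "i < x \<or> \<not> (length A < i \<and> i \<le> length A + length (P @ M))")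
      case False
      then have f: "x \<le> i" "i \<le> length A + length P + length M" by auto
      have j: "i - 1 = length A + length P + (i - 1 - length A - length P)" using f h by simp
      have jl: "i - 1 - length A - length P < length M" using f h by simp
      have "(A @ P @ M @ B) ! (i - 1) = M ! (i - 1 - length A - length P)"
        by (subst j) (rule nth4_3[OF jl])
      then have "(A @ P @ M @ B) ! (i - 1) \<in> set M" using jl by simp
      then show ?thesis using M by auto
    qed blast
  next
    show "length A < x" using h by simp
  next
    show "x \<le> length A + length (P @ M)" using h by simp
  qed
qed

lemma step_odd:
  assumes S: "\<And>i. i < length S \<Longrightarrow> \<exists>l\<le>i. S ! l = c"
    and M: "c \<notin> set M" and x: "x \<in> {1..length (A @ M @ S @ B)}"
  shows "((length A < x \<and> x \<le> length A + length (M @ S)) \<and>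
     (\<forall>i\<in>{1..length (A @ M @ S @ B)}. (x < i \<or> \<not> (A @ M @ S @ B) ! (i - 1) = c)
          \<or> \<not> (length A < i \<and> i \<le> length A + length (M @ S))))
   \<longleftrightarrow> (length A < x \<and> x \<le> length A + length M)"
proof
  assume h: "(length A < x \<and> x \<le> length A + length (M @ S)) \<and>
     (\<forall>i\<in>{1..length (A @ M @ S @ B)}. (x < i \<or> \<not> (A @ M @ S @ B) ! (i - 1) = c)
          \<or> \<not> (length A < i \<and> i \<le> length A + length (M @ S)))"
  show "length A < x \<and> x \<le> length A + length M"
  proof (rule ccontr)
    assume nt: "\<not> ?thesis"
    have gx: "length A + length M < x" using nt h by auto
    with h have xs: "x - 1 - length A - length M < length S" by auto
    then obtain l where l: "l \<le> x - 1 - length A - length M" "S ! l = c" using S by blast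
    have "l < length S" using l(1) xs by linarith
    have "(A @ M @ S @ B) ! (length A + length M + l + 1 - 1) = c" using l \<open>l < length S\<close>
      by (simp add: nth_append)
    have i1: "length A + length M + l + 1 \<in> {1..length (A @ M @ S @ B)}" using \<open>l < length S\<close> by simp
    have i2: "\<not> x < length A + length M + l + 1" using l(1) gx by arith
    have i3: "length A < length A + length M + l + 1 \<and> length A + length M + l + 1 \<le> length A + length (M @ S)"
      using \<open>l < length S\<close> by simp
    from h[THEN conjunct2, rule_format, OF i1] i2 i3 \<open>(A @ M @ S @ B) ! (length A + length M + l + 1 - 1) = c\<close>
    show False by blast
  qed
next
  assume h: "length A < x \<and> x \<le> length A + length M"
  show "(length A < x \<and> x \<le> length A + length (M @ S)) \<and>
     (\<forall>i\<in>{1..length (A @ M @ S @ B)}. (x < i \<or> \<not> (A @ M @ S @ B) ! (i - 1) = c)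
          \<or> \<not> (length A < i \<and> i \<le> length A + length (M @ S)))"
  proof (intro conjI ballI)
    fix i assume i: "i \<in> {1..length (A @ M @ S @ B)}"
    show "(x < i \<or> \<not> (A @ M @ S @ B) ! (i - 1) = c)
          \<or> \<not> (length A < i \<and> i \<le> length A + length (M @ S))"
    proof (cases "x < i \<or> \<not> (length A < i \<and> i \<le> length A + length (M @ S))")
      case False
      then have "(A @ M @ S @ B) ! (i - 1) = M ! (i - 1 - length A)"
        using h by (auto simp: nth_append)
      moreover have "i - 1 - length A < length M" using False h by auto
      ultimately have "(A @ M @ S @ B) ! (i - 1) \<in> set M" by simp
      then show ?thesis using M by auto
    qed auto
  qed (use h in auto)
qed

lemma step_even':
  assumes P: "\<And>i. i < length P \<Longrightarrow> \<exists>l. i \<le> l \<and> l < length P \<and> P ! l = c"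
    and M: "c \<notin> set M" and x: "x \<in> {1..length w}" and w: "w = A @ P @ M @ B"
  shows "((length A < x \<and> x \<le> length A + (length P + length M)) \<and>
     (\<forall>i\<in>{1..length w}. (i < x \<or> w ! (i - 1) \<noteq> c)
          \<or> \<not> (length A < i \<and> i \<le> length A + (length P + length M))))
   \<longleftrightarrow> (length A + length P < x \<and> x \<le> length A + length P + length M)"
  using step_even[OF P M, of x A B] x unfolding w by simp

lemma step_odd':
  assumes S: "\<And>i. i < length S \<Longrightarrow> \<exists>l\<le>i. S ! l = c"
    and M: "c \<notin> set M" and x: "x \<in> {1..length w}" and w: "w = A @ M @ S @ B"
  shows "((length A < x \<and> x \<le> length A + (length M + length S)) \<and>
     (\<forall>i\<in>{1..length w}. (x < i \<or> w ! (i - 1) \<noteq> c)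
          \<or> \<not> (length A < i \<and> i \<le> length A + (length M + length S))))
   \<longleftrightarrow> (length A < x \<and> x \<le> length A + length M)"
  using step_odd[OF S M, of x A B] x unfolding w by simp

lemma reg:
  fixes W :: "nat \<Rightarrow> nat list"
  assumes dec: "\<And>j. 2 \<le> j \<Longrightarrow> W (Suc j) = (if even j then cr n [0..<Suc j] else []) @ W j @ (if even j then [] else cr n (rev [0..<Suc j]))"
  and nl: "\<And>j. 2 \<le> j \<Longrightarrow> j \<notin> set (W j)"
  assumes k2: "2 \<le> k"
  shows "\<exists>A B. W (k+d) = A @ W k @ B \<and> (\<forall>(v::var) (s::var\<Rightarrow>nat). s v \<in> {1..length (W (k+d))} \<longrightarrow> (sat (W (k+d)) s (Rk d k v) \<longleftrightarrow> length A < s v \<and> s v \<le> length A + length (W k)))"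
  using k2
proof (induction d arbitrary: k)
  case 0
  then show ?case by (intro exI[of _ "[]"]) auto
next
  case (Suc d)
  obtain w where wd: "w = W (k + Suc d)" by simp
  have e: "W (Suc k + d) = w" using wd by simp
  obtain A B where AB: "w = A @ W (Suc k) @ B"
    and H: "\<And>(v::var) (s::var\<Rightarrow>nat). s v \<in> {1..length w} \<Longrightarrow> sat w s (Rk d (Suc k) v) \<longleftrightarrow> length A < s v \<and> s v \<le> length A + length (W (Suc k))"
    using Suc.IH[of "Suc k"] Suc.prems unfolding e by auto
  have G: "\<exists>A B. w = A @ W k @ B \<and> (\<forall>(v::var) (s::var\<Rightarrow>nat). s v \<in> {1..length w} \<longrightarrow> (sat w s (Rk (Suc d) k v) \<longleftrightarrow> length A < s v \<and> s v \<le> length A + length (W k)))"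
  proof (cases "even k")
    case True
    define P where "P = cr n [0..<Suc k]"
    have WS: "W (Suc k) = P @ W k" using dec[of k] Suc.prems True P_def by simp
    have w: "w = A @ P @ W k @ B" using AB WS by simp
    have Pp: "\<And>i. i < length P \<Longrightarrow> \<exists>l. i \<le> l \<and> l < length P \<and> P ! l = k"
      unfolding P_def by (rule pre_prop) auto
    have G2: "\<forall>(v::var) (s::var\<Rightarrow>nat). s v \<in> {1..length w} \<longrightarrow> (sat w s (Rk (Suc d) k v) \<longleftrightarrow> length (A @ P) < s v \<and> s v \<le> length (A @ P) + length (W k))"
    proof (intro allI impI)
      fix v :: var and s :: "var \<Rightarrow> nat" assume sv: "s v \<in> {1..length w}"
      have "sat w s (Rk (Suc d) k v) \<longleftrightarrow> (sat w s (Rk d (Suc k) v) \<and> (\<forall>i\<in>{1..length w}. (i < s v \<or> w ! (i - 1) \<noteq> k) \<or> \<not> sat w (s(ov v := i)) (Rk d (Suc k) (ov v))))"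
        using True by simp
      also have "\<dots> \<longleftrightarrow> ((length A < s v \<and> s v \<le> length A + (length P + length (W k))) \<and>
          (\<forall>i\<in>{1..length w}. (i < s v \<or> w ! (i - 1) \<noteq> k) \<or> \<not> (length A < i \<and> i \<le> length A + (length P + length (W k)))))"
        using sv by (simp add: H WS)
      also have "\<dots> \<longleftrightarrow> (length A + length P < s v \<and> s v \<le> length A + length P + length (W k))"
        by (rule step_even'[OF Pp nl[OF Suc.prems] sv w])
      finally show "sat w s (Rk (Suc d) k v) = (length (A @ P) < s v \<and> s v \<le> length (A @ P) + length (W k))"
        by simp
    qed
    show ?thesis using w G2 by (intro exI[of _ "A @ P"] exI[of _ B]) simp
  next
    case False
    define S where "S = cr n (rev [0..<Suc k])"
    have WS: "W (Suc k) = W k @ S" using dec[of k] Suc.prems False S_def by simp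
    have w: "w = A @ W k @ S @ B" using AB WS by simp
    have Sp: "\<And>i. i < length S \<Longrightarrow> \<exists>l\<le>i. S ! l = k"
      unfolding S_def by (rule suf_prop) auto
    have G2: "\<forall>(v::var) (s::var\<Rightarrow>nat). s v \<in> {1..length w} \<longrightarrow> (sat w s (Rk (Suc d) k v) \<longleftrightarrow> length A < s v \<and> s v \<le> length A + length (W k))"
    proof (intro allI impI)
      fix v :: var and s :: "var \<Rightarrow> nat" assume sv: "s v \<in> {1..length w}"
      have "sat w s (Rk (Suc d) k v) \<longleftrightarrow> (sat w s (Rk d (Suc k) v) \<and> (\<forall>i\<in>{1..length w}. (s v < i \<or> w ! (i - 1) \<noteq> k) \<or> \<not> sat w (s(ov v := i)) (Rk d (Suc k) (ov v))))"
        using False by simp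
      also have "\<dots> \<longleftrightarrow> ((length A < s v \<and> s v \<le> length A + (length (W k) + length S)) \<and>
          (\<forall>i\<in>{1..length w}. (s v < i \<or> w ! (i - 1) \<noteq> k) \<or> \<not> (length A < i \<and> i \<le> length A + (length (W k) + length S))))"
        using sv by (simp add: H WS)
      also have "\<dots> \<longleftrightarrow> (length A < s v \<and> s v \<le> length A + length (W k))"
        by (rule step_odd'[OF Sp nl[OF Suc.prems] sv w])
      finally show "sat w s (Rk (Suc d) k v) = (length A < s v \<and> s v \<le> length A + length (W k))" .
    qed
    show ?thesis using w G2 by (intro exI[of _ A] exI[of _ "S @ B"]) simp
  qed
  then show ?case unfolding wd .
qed

lemma dec_u: "2 \<le> j \<Longrightarrow> uw (Suc j) n = (if even j then cr n [0..<Suc j] else []) @ uw j n @ (if even j then [] else cr n (rev [0..<Suc j]))"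
  by (cases j rule: nat.exhaust; cases "j - 1" rule: nat.exhaust) auto

lemma dec_v: "2 \<le> j \<Longrightarrow> vw (Suc j) n = (if even j then cr n [0..<Suc j] else []) @ vw j n @ (if even j then [] else cr n (rev [0..<Suc j]))"
  by (cases j rule: nat.exhaust; cases "j - 1" rule: nat.exhaust) auto

lemma set_u: "2 \<le> j \<Longrightarrow> set (uw j n) \<subseteq> {..<j}"
proof (induction j)
  case 0 then show ?case by simp
next
  case (Suc j)
  show ?case
  proof (cases "j < 2")
    case True
    then have "Suc j = 2" using Suc.prems by simp
    then show ?thesis by (auto simp: numeral_2_eq_2)
  next
    case False
    then show ?thesis using Suc.IH dec_u[of j n] by auto
  qed
qed

lemma set_v: "2 \<le> j \<Longrightarrow> set (vw j n) \<subseteq> {..<j}"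
proof (induction j)
  case 0 then show ?case by simp
next
  case (Suc j)
  show ?case
  proof (cases "j < 2")
    case True
    then have "Suc j = 2" using Suc.prems by simp
    then show ?thesis by (auto simp: numeral_2_eq_2)
  next
    case False
    then show ?thesis using Suc.IH dec_v[of j n] by auto
  qed
qed

definition phi :: "nat \<Rightarrow> fo2" where
  "phi m = Ex VY (And (Letter 0 VY) (And (Rk (m-2) 2 VY)
     (All VX (Or (Or (Neg (Less VX VY)) (Neg (Letter 1 VX))) (Neg (Rk (m-2) 2 VX))))))"

lemma phi_sentence: "sentence (phi m)"
proof -
  have "freev (Rk (m-2) 2 VY) \<subseteq> {VY}" "freev (Rk (m-2) 2 VX) \<subseteq> {VX}" by (rule fv_Rk)+
  then show ?thesis unfolding sentence_def phi_def by auto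
qed

lemma phi_alpha: "2 \<le> m \<Longrightarrow> over_alphabet m (phi m)"
  using let_Rk[of "m-2" 2 VX] let_Rk[of "m-2" 2 VY] 
  unfolding over_alphabet_def phi_def by fastforce
lemma phi_blocks: "2 \<le> m \<Longrightarrow> blocks (phi m) \<le> m"
proof -
  assume m: "2 \<le> m"
  have a: "nblocks True (Some True) (Rk (m-2) 2 VY) \<le> m - 2" using nb_Rk by blast
  have b: "nblocks False (Some False) (Rk (m-2) 2 VX) \<le> m - 2" using nb_Rk by blast
  show ?thesis using a b m unfolding blocks_def phi_def by auto
qed

lemma phi_FO2: "2 \<le> m \<Longrightarrow> phi m \<in> FO2_m m"
  unfolding FO2_m_def FO2_mn_def using phi_blocks
  by (intro UN_I[of "max m (qdepth (phi m))"]) auto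

lemma phi_u: assumes m: "2 \<le> m" shows "models (uw m n) (phi m)"
proof -
  obtain A B where AB: "uw (2 + (m-2)) n = A @ uw 2 n @ B"
    and H: "\<And>v s. s v \<in> {1..length (uw (2 + (m-2)) n)} \<Longrightarrow> (sat (uw (2 + (m-2)) n) s (Rk (m-2) 2 v) \<longleftrightarrow> length A < s v \<and> s v \<le> length A + length (uw 2 n))"
    using reg[where W="\<lambda>j. uw j n" and n=n and k=2 and d="m-2", OF dec_u] set_u by fastforce
  have e: "2 + (m - 2) = m" using m by simp
  define w where "w = uw m n"
  have w: "w = A @ uw 2 n @ B" using AB e w_def by simp
  have H': "\<And>v s. s v \<in> {1..length w} \<Longrightarrow> (sat w s (Rk (m-2) 2 v) \<longleftrightarrow> length A < s v \<and> s v \<le> length A + length (uw 2 n))"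
    using H unfolding e w_def by blast
  have l: "length A + 1 \<in> {1..length w}" using w by (simp add: numeral_2_eq_2)
  let ?s = "(\<lambda>_. 0)(VY := length A + 1)"
  have R: "sat w ?s (Rk (m-2) 2 VY)" using H'[of ?s VY] l by (simp add: numeral_2_eq_2)
  have L: "w ! (length A + 1 - 1) = 0" using w by (simp add: nth_append numeral_2_eq_2)
  have Q: "\<forall>j\<in>{1..length w}. sat w (?s(VX := j)) (Or (Or (Neg (Less VX VY)) (Neg (Letter 1 VX))) (Neg (Rk (m-2) 2 VX)))"
  proof
    fix j assume j: "j \<in> {1..length w}"
    show "sat w (?s(VX := j)) (Or (Or (Neg (Less VX VY)) (Neg (Letter 1 VX))) (Neg (Rk (m-2) 2 VX)))"
    proof (cases "j < length A + 1")
      case True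
      have "\<not> sat w (?s(VX := j)) (Rk (m-2) 2 VX)" using H'[of "?s(VX := j)" VX] j True by simp
      then show ?thesis by simp
    qed simp
  qed
  have "sat w ?s (And (Letter 0 VY) (And (Rk (m-2) 2 VY)
     (All VX (Or (Or (Neg (Less VX VY)) (Neg (Letter 1 VX))) (Neg (Rk (m-2) 2 VX))))))"
    using R L Q by simp
  then show ?thesis unfolding models_def phi_def w_def[symmetric] using l by (metis sat.simps(9))
qed

lemma phi_v: assumes m: "2 \<le> m" and n: "1 \<le> n" shows "\<not> models (vw m n) (phi m)"
proof
  obtain A B where AB: "vw (2 + (m-2)) n = A @ vw 2 n @ B"
    and H: "\<And>v s. s v \<in> {1..length (vw (2 + (m-2)) n)} \<Longrightarrow> (sat (vw (2 + (m-2)) n) s (Rk (m-2) 2 v) \<longleftrightarrow> length A < s v \<and> s v \<le> length A + length (vw 2 n))"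
    using reg[where W="\<lambda>j. vw j n" and n=n and k=2 and d="m-2", OF dec_v] set_v by fastforce
  have e: "2 + (m - 2) = m" using m by simp
  define w where "w = vw m n"
  have w: "w = A @ vw 2 n @ B" using AB e w_def by simp
  have H': "\<And>v s. s v \<in> {1..length w} \<Longrightarrow> (sat w s (Rk (m-2) 2 v) \<longleftrightarrow> length A < s v \<and> s v \<le> length A + length (vw 2 n))"
    using H unfolding e w_def by blast
  obtain n' where n': "n = Suc n'" using n by (cases n) auto
  have v2: "vw 2 n = 1 # 0 # cr (2 * n') [1,0] @ [1, 0]"
    by (simp add: numeral_2_eq_2 n' replicate_append_same[symmetric])
  assume "models (vw m n) (phi m)"
  then obtain i where i: "i \<in> {1..length w}" and s: "sat w ((\<lambda>_. 0)(VY := i)) (And (Letter 0 VY) (And (Rk (m-2) 2 VY)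
     (All VX (Or (Or (Neg (Less VX VY)) (Neg (Letter 1 VX))) (Neg (Rk (m-2) 2 VX))))))"
    unfolding models_def phi_def w_def[symmetric] by auto
  have i0: "w ! (i - 1) = 0" and ir: "length A < i \<and> i \<le> length A + length (vw 2 n)"
    using s i by (auto simp: H')
  have l: "length A + 1 \<in> {1..length w}" using w v2 by simp
  have l1: "w ! (length A + 1 - 1) = 1" using w v2 by (simp add: nth_append)
  have lt: "length A + 1 < i" using ir i0 l1 by (cases "i = length A + 1") auto
  have "sat w (((\<lambda>_. 0)(VY := i))(VX := length A + 1)) (Or (Or (Neg (Less VX VY)) (Neg (Letter 1 VX))) (Neg (Rk (m-2) 2 VX)))"
    using s l by auto
  then show False using lt l1 l ir v2 by (auto simp: H')
qed

theorem lemma4p9: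
  fixes m :: nat
  assumes "m \<ge> 1"
  shows "\<exists>\<phi>. sentence \<phi> \<and> over_alphabet m \<phi> \<and> \<phi> \<in> FO2_m m \<and> separates \<phi> (KK m) (LL m)"
proof (cases "m = 1")
  case True
  have "sentence (Ex VX FTrue)" "over_alphabet 1 (Ex VX FTrue)" "Ex VX FTrue \<in> FO2_m 1"
    unfolding sentence_def over_alphabet_def FO2_m_def FO2_mn_def blocks_def by auto
  moreover have "separates (Ex VX FTrue) (KK 1) (LL 1)"
    unfolding separates_def KK_def LL_def models_def by auto
  ultimately show ?thesis using True by blast
next
  case False
  then have m: "2 \<le> m" using assms by simp
  have "separates (phi m) (KK m) (LL m)"
    unfolding separates_def KK_def LL_def using phi_u[OF m] phi_v[OF m] by auto
  then show ?thesis using phi_sentence phi_alpha[OF m] phi_FO2[OF m] by blast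
qed

end
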